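(* Let $G$ be a finite group with $c(G)$ conjugacy classes. Then $Spec_3(G)=\{\frac{c(G)}{|G|},1\}$. More precisely, $Pr(a_1a_2a_3=a_{\pi_1}a_{\pi_2}a_{\pi_3})=\frac{c(G)}{|G|}$ for every non-identity $\pi\in S_3$, where $a_1,a_2,a_3$ are independent uniformly random elements of $G$.
   Context: Permutations are written in one-line notation $\pi=\langle\pi_1\dots\pi_n\rangle$, with $\pi_i=\pi(i)$. For a finite group $G$, $Pr_\pi(G)$ is the probability that $a_1\cdots a_n=a_{\pi_1}\cdots a_{\pi_n}$ for independent uniformly random $a_1,\dots,a_n\in G$. $Spec_n(G)$ is the set $\{Pr_\pi(G):\pi\in S_n\}$. $c(G)$ denotes the number of conjugacy classes of $G$. *)

theory Defs
  imports Complex_Main "HOL-Algebra.Group" "HOL-Combinatorics.Permutations" "HOL-Library.FuncSet"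
begin

definition conj_class :: "('a, 'b) monoid_scheme \<Rightarrow> 'a \<Rightarrow> 'a set" where
  "conj_class G x = {g \<otimes>\<^bsub>G\<^esub> x \<otimes>\<^bsub>G\<^esub> inv\<^bsub>G\<^esub> g | g. g \<in> carrier G}"

definition num_conj_classes :: "('a, 'b) monoid_scheme \<Rightarrow> nat" where
  "num_conj_classes G = card (conj_class G ` carrier G)"

fun tuple_prod :: "('a, 'b) monoid_scheme \<Rightarrow> (nat \<Rightarrow> 'a) \<Rightarrow> nat \<Rightarrow> 'a" where
  "tuple_prod G a 0 = \<one>\<^bsub>G\<^esub>"
| "tuple_prod G a (Suc n) = tuple_prod G a n \<otimes>\<^bsub>G\<^esub> a n"

text \<open>Pr_pi(G) for a permutation pi of {0..<n} (0-indexed version of S_n):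
  probability that a_0...a_(n-1) = a_(pi 0) ... a_(pi (n-1)) for uniform independent a_i.\<close>
definition perm_prob :: "('a, 'b) monoid_scheme \<Rightarrow> nat \<Rightarrow> (nat \<Rightarrow> nat) \<Rightarrow> real" where
  "perm_prob G n \<pi> =
     real (card {a \<in> {..<n} \<rightarrow>\<^sub>E carrier G. tuple_prod G a n = tuple_prod G (a \<circ> \<pi>) n})
     / real (card (carrier G)) ^ n"

definition Spec :: "('a, 'b) monoid_scheme \<Rightarrow> nat \<Rightarrow> real set" where
  "Spec G n = perm_prob G n ` {\<pi>. \<pi> permutes {..<n}}"

end

theory Submission
  imports Defs "HOL-Algebra.Group_Action"
begin

definition comm_pairs :: "('a, 'b) monoid_scheme \<Rightarrow> ('a \<times> 'a) set" where
  "comm_pairs G = {(x,y). x \<in> carrier G \<and> y \<in> carrier G \<and> x \<otimes>\<^bsub>G\<^esub> y = y \<otimes>\<^bsub>G\<^esub> x}"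

lemma comm_count:
  fixes G (structure)
  assumes "group G" and fin: "finite (carrier G)"
  shows "card (comm_pairs G) = num_conj_classes G * card (carrier G)"
proof -
  interpret group G by fact
  let ?phi = "\<lambda>g. (\<lambda>h \<in> carrier G. g \<otimes> h \<otimes> (inv g))"
  interpret group_action G "carrier G" ?phi by (rule action_by_conjugation)
  have orb: "orbit G ?phi x = conj_class G x" if "x \<in> carrier G" for x
    using that unfolding orbit_def conj_class_def by auto
  have orbs: "orbits G (carrier G) ?phi = conj_class G ` carrier G"
    unfolding orbits_def using orb by auto
  have inv: "invariants (carrier G) ?phi g = {x \<in> carrier G. g \<otimes> x = x \<otimes> g}"
    if g: "g \<in> carrier G" for g
  proof -
    have "g \<otimes> x \<otimes> inv g = x \<longleftrightarrow> g \<otimes> x = x \<otimes> g" if "x \<in> carrier G" for x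
      using g that by (metis inv_closed inv_solve_right m_closed)
    thus ?thesis unfolding invariants_def by auto
  qed
  have "comm_pairs G = Sigma (carrier G) (\<lambda>g. {x \<in> carrier G. g \<otimes> x = x \<otimes> g})"
    unfolding comm_pairs_def by auto
  hence "card (comm_pairs G) = (\<Sum>g \<in> carrier G. card (invariants (carrier G) ?phi g))"
    using fin inv by (simp add: card_SigmaI)
  also have "\<dots> = card (orbits G (carrier G) ?phi) * order G"
    using burnside[OF fin fin] by simp
  finally show ?thesis unfolding orbs num_conj_classes_def order_def .
qed



lemma card_cases:
  fixes G (structure)
  assumes "group G"
  defines "C \<equiv> carrier G" and "K \<equiv> {(x,y). x \<in> carrier G \<and> y \<in> carrier G \<and> x \<otimes> y = y \<otimes> x}"
  shows "card {(x,y,z). x\<in>C \<and> y\<in>C \<and> z\<in>C \<and> x \<otimes> y \<otimes> z = y \<otimes> x \<otimes> z} = card (C \<times> K)"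
    and "card {(x,y,z). x\<in>C \<and> y\<in>C \<and> z\<in>C \<and> x \<otimes> y \<otimes> z = x \<otimes> z \<otimes> y} = card (C \<times> K)"
    and "card {(x,y,z). x\<in>C \<and> y\<in>C \<and> z\<in>C \<and> x \<otimes> y \<otimes> z = z \<otimes> y \<otimes> x} = card (C \<times> K)"
    and "card {(x,y,z). x\<in>C \<and> y\<in>C \<and> z\<in>C \<and> x \<otimes> y \<otimes> z = y \<otimes> z \<otimes> x} = card (C \<times> K)"
    and "card {(x,y,z). x\<in>C \<and> y\<in>C \<and> z\<in>C \<and> x \<otimes> y \<otimes> z = z \<otimes> x \<otimes> y} = card (C \<times> K)"
proof -
  interpret group G by fact
  have canc [simp]: "x \<otimes> (inv x \<otimes> z) = z" "inv x \<otimes> (x \<otimes> z) = z"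
    if "x \<in> carrier G" "z \<in> carrier G" for x z
    using that by (simp_all add: m_assoc[symmetric])
  show "card {(x,y,z). x\<in>C \<and> y\<in>C \<and> z\<in>C \<and> x \<otimes> y \<otimes> z = y \<otimes> x \<otimes> z} = card (C \<times> K)"
    apply (rule bij_betw_same_card[where f="\<lambda>(x,y,z). (z,(x,y))"])
    apply (rule bij_betw_byWitness[where f'="\<lambda>(z,(x,y)). (x,y,z)"])
    by (auto simp: C_def K_def)
  show "card {(x,y,z). x\<in>C \<and> y\<in>C \<and> z\<in>C \<and> x \<otimes> y \<otimes> z = x \<otimes> z \<otimes> y} = card (C \<times> K)"
    apply (rule bij_betw_same_card[where f="\<lambda>(x,y,z). (x,(y,z))"])
    apply (rule bij_betw_byWitness[where f'="\<lambda>(x,(y,z)). (x,y,z)"])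
    by (auto simp: C_def K_def m_assoc)
  show "card {(x,y,z). x\<in>C \<and> y\<in>C \<and> z\<in>C \<and> x \<otimes> y \<otimes> z = z \<otimes> y \<otimes> x} = card (C \<times> K)"
  proof (rule bij_betw_same_card[where f="\<lambda>(x,y,z). (x,(y \<otimes> x, inv x \<otimes> z))"],
         rule bij_betw_byWitness[where f'="\<lambda>(x,(w,u)). (x,w \<otimes> inv x, x \<otimes> u)"])
    have e1: "x \<otimes> y \<otimes> z = z \<otimes> y \<otimes> x \<longleftrightarrow> y \<otimes> x \<otimes> (inv x \<otimes> z) = inv x \<otimes> z \<otimes> (y \<otimes> x)"
      if "x \<in> carrier G" "y \<in> carrier G" "z \<in> carrier G" for x y z
    proof -
      have xz: "x \<otimes> (inv x \<otimes> z) = z" using that by (simp add: m_assoc[symmetric])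
      have 1: "y \<otimes> x \<otimes> (inv x \<otimes> z) = y \<otimes> z" using that by (simp add: m_assoc xz)
      have 2: "inv x \<otimes> z \<otimes> (y \<otimes> x) = inv x \<otimes> (z \<otimes> y \<otimes> x)" using that by (simp add: m_assoc)
      have 3: "(y \<otimes> z = inv x \<otimes> (z \<otimes> y \<otimes> x)) \<longleftrightarrow> (z \<otimes> y \<otimes> x = x \<otimes> (y \<otimes> z))"
        using that by (simp add: inv_solve_left)
      show ?thesis unfolding 1 2 3 using that by (auto simp: m_assoc)
    qed
    show "\<forall>a\<in>{(x,y,z). x\<in>C \<and> y\<in>C \<and> z\<in>C \<and> x \<otimes> y \<otimes> z = z \<otimes> y \<otimes> x}.
      (\<lambda>(x,(w,u)). (x,w \<otimes> inv x, x \<otimes> u)) ((\<lambda>(x,y,z). (x,(y \<otimes> x, inv x \<otimes> z))) a) = a"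
      by (auto simp: C_def m_assoc)
    show "\<forall>a\<in>C \<times> K. (\<lambda>(x,y,z). (x,(y \<otimes> x, inv x \<otimes> z))) ((\<lambda>(x,(w,u)). (x,w \<otimes> inv x, x \<otimes> u)) a) = a"
      by (auto simp: C_def K_def m_assoc)
    show "(\<lambda>(x,y,z). (x,(y \<otimes> x, inv x \<otimes> z))) ` {(x,y,z). x\<in>C \<and> y\<in>C \<and> z\<in>C \<and> x \<otimes> y \<otimes> z = z \<otimes> y \<otimes> x} \<subseteq> C \<times> K"
      using e1 by (auto simp: C_def K_def)
    show "(\<lambda>(x,(w,u)). (x,w \<otimes> inv x, x \<otimes> u)) ` (C \<times> K) \<subseteq> {(x,y,z). x\<in>C \<and> y\<in>C \<and> z\<in>C \<and> x \<otimes> y \<otimes> z = z \<otimes> y \<otimes> x}"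
    proof clarsimp
      fix x w u assume "x \<in> C" "(w,u) \<in> K"
      thus "w \<otimes> inv x \<in> C \<and> x \<otimes> u \<in> C \<and> x \<otimes> (w \<otimes> inv x) \<otimes> (x \<otimes> u) = x \<otimes> u \<otimes> (w \<otimes> inv x) \<otimes> x"
        using e1[of x "w \<otimes> inv x" "x \<otimes> u"] by (auto simp: C_def K_def m_assoc)
    qed
  qed
  show "card {(x,y,z). x\<in>C \<and> y\<in>C \<and> z\<in>C \<and> x \<otimes> y \<otimes> z = y \<otimes> z \<otimes> x} = card (C \<times> K)"
    apply (rule bij_betw_same_card[where f="\<lambda>(x,y,z). (y,(x, y \<otimes> z))"])
    apply (rule bij_betw_byWitness[where f'="\<lambda>(y,(x,b)). (x,y,inv y \<otimes> b)"])
    by (auto simp: C_def K_def m_assoc)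
  show "card {(x,y,z). x\<in>C \<and> y\<in>C \<and> z\<in>C \<and> x \<otimes> y \<otimes> z = z \<otimes> x \<otimes> y} = card (C \<times> K)"
    apply (rule bij_betw_same_card[where f="\<lambda>(x,y,z). (x,(x \<otimes> y, z))"])
    apply (rule bij_betw_byWitness[where f'="\<lambda>(x,(b,z)). (x,inv x \<otimes> b,z)"])
    by (auto simp: C_def K_def m_assoc)
qed


lemma three_eq: "{..<3::nat} = {0,1,2}" by auto

lemma card3:
  "card {a \<in> {..<3::nat} \<rightarrow>\<^sub>E C. P (a 0) (a 1) (a 2)} = card {(x,y,z). x\<in>C \<and> y\<in>C \<and> z\<in>C \<and> P x y z}"
proof (rule bij_betw_same_card[where f="\<lambda>a. (a 0, a 1, a 2)"],
       rule bij_betw_byWitness[where f'="\<lambda>(x,y,z). (\<lambda>i. if i = 0 then x else if i = 1 then y else if i = 2 then z else undefined)"])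
  show "\<forall>a\<in>{a \<in> {..<3::nat} \<rightarrow>\<^sub>E C. P (a 0) (a 1) (a 2)}.
     (\<lambda>(x,y,z). (\<lambda>i. if i = 0 then x else if i = 1 then y else if i = 2 then z else undefined)) (a 0, a 1, a 2) = a"
  proof clarify
    fix a assume "a \<in> {..<3::nat} \<rightarrow>\<^sub>E C"
    thus "(\<lambda>i. if i = 0 then a 0 else if i = 1 then a 1 else if i = 2 then a 2 else undefined) = a"
      by (auto simp: fun_eq_iff PiE_def extensional_def)
  qed
qed (auto simp: PiE_def extensional_def)


lemma tp3:
  fixes G (structure)
  assumes "group G" "a 0 \<in> carrier G"
  shows "tuple_prod G a 3 = a 0 \<otimes> a 1 \<otimes> a 2"
proof -
  interpret group G by fact
  show ?thesis using assms(2) by (simp add: numeral_3_eq_3 numeral_2_eq_2)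
qed

lemma lt3: "(x::nat) < 3 \<Longrightarrow> x = 0 \<or> x = 1 \<or> x = 2" by (simp add: eval_nat_numeral less_Suc_eq)

lemma perm3_cases:
  assumes "\<pi> permutes {..<3::nat}"
  shows "(\<pi> 0, \<pi> 1, \<pi> 2) \<in> {(0,1,2),(1,0,2),(0,2,1),(2,1,0),(1,2,0),(2,0,1)}"
proof -
  have r: "\<pi> i = 0 \<or> \<pi> i = 1 \<or> \<pi> i = 2" if "i < 3" for i
  proof -
    have "\<pi> i \<in> {..<3}" using permutes_in_image[OF assms] that by simp
    thus ?thesis using lt3 by simp
  qed
  have "inj \<pi>" using assms permutes_inj by blast
  hence d: "\<pi> 0 \<noteq> \<pi> 1" "\<pi> 0 \<noteq> \<pi> 2" "\<pi> 1 \<noteq> \<pi> 2" by (simp_all add: inj_eq)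
  have r0: "\<pi> 0 = 0 \<or> \<pi> 0 = 1 \<or> \<pi> 0 = 2" by (rule r) simp
  have r1: "\<pi> 1 = 0 \<or> \<pi> 1 = 1 \<or> \<pi> 1 = 2" by (rule r) simp
  have r2: "\<pi> 2 = 0 \<or> \<pi> 2 = 1 \<or> \<pi> 2 = 2" by (rule r) simp
  from r0 r1 r2 d show ?thesis
    by (elim disjE) simp_all
qed

lemma perm3_id:
  assumes "\<pi> permutes {..<3::nat}" "\<pi> 0 = 0" "\<pi> 1 = 1" "\<pi> 2 = 2"
  shows "\<pi> = id"
proof
  fix x show "\<pi> x = id x"
  proof (cases "x < 3")
    case True
    hence "x = 0 \<or> x = 1 \<or> x = 2" by (rule lt3)
    thus ?thesis using assms(2-4) by auto
  next
    case False
    thus ?thesis using permutes_not_in[OF assms(1), of x] by auto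
  qed
qed

lemma count_nonid:
  fixes G (structure)
  assumes "group G" "\<pi> permutes {..<3::nat}" "\<pi> \<noteq> id"
  shows "card {a \<in> {..<3} \<rightarrow>\<^sub>E carrier G. tuple_prod G a 3 = tuple_prod G (a \<circ> \<pi>) 3}
    = card (carrier G \<times> comm_pairs G)"
proof -
  interpret group G by fact
  have "{a \<in> {..<3} \<rightarrow>\<^sub>E carrier G. tuple_prod G a 3 = tuple_prod G (a \<circ> \<pi>) 3}
    = {a \<in> {..<3} \<rightarrow>\<^sub>E carrier G. a 0 \<otimes> a 1 \<otimes> a 2 = a (\<pi> 0) \<otimes> a (\<pi> 1) \<otimes> a (\<pi> 2)}"
  proof (rule Collect_cong)
    fix a
    show "(a \<in> {..<3} \<rightarrow>\<^sub>E carrier G \<and> tuple_prod G a 3 = tuple_prod G (a \<circ> \<pi>) 3) =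
          (a \<in> {..<3} \<rightarrow>\<^sub>E carrier G \<and> a 0 \<otimes> a 1 \<otimes> a 2 = a (\<pi> 0) \<otimes> a (\<pi> 1) \<otimes> a (\<pi> 2))"
    proof (cases "a \<in> {..<3} \<rightarrow>\<^sub>E carrier G")
      case True
      have "\<pi> 0 \<in> {..<3}" using permutes_in_image[OF assms(2), of 0] by simp
      hence p0: "a (\<pi> 0) \<in> carrier G" by (rule PiE_mem[OF True])
      have a0: "a 0 \<in> carrier G" by (rule PiE_mem[OF True]) simp
      have t1: "tuple_prod G a 3 = a 0 \<otimes> a 1 \<otimes> a 2" using tp3[OF assms(1), of a] a0 by simp
      have t2: "tuple_prod G (a \<circ> \<pi>) 3 = a (\<pi> 0) \<otimes> a (\<pi> 1) \<otimes> a (\<pi> 2)"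
        using tp3[OF assms(1), of "a \<circ> \<pi>"] p0 by simp
      show ?thesis unfolding t1 t2 using True by blast
    next
      case False
      thus ?thesis by blast
    qed
  qed
  also have "card \<dots> = card (carrier G \<times> comm_pairs G)"
  proof -
    note cc = card_cases[OF assms(1), folded comm_pairs_def]
    let ?S = "{a \<in> {..<3::nat} \<rightarrow>\<^sub>E carrier G. a 0 \<otimes> a 1 \<otimes> a 2 = a (\<pi> 0) \<otimes> a (\<pi> 1) \<otimes> a (\<pi> 2)}"
    have cs: "card ?S = k" if "?S = {a \<in> {..<3::nat} \<rightarrow>\<^sub>E carrier G. P (a 0) (a 1) (a 2)}"
      "card {(x,y,z). x \<in> carrier G \<and> y \<in> carrier G \<and> z \<in> carrier G \<and> P x y z} = k" for P k
      using that card3 by metis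
    from perm3_cases[OF assms(2)]
    have "(\<pi> 0, \<pi> 1, \<pi> 2) = (0,1,2) \<or> (\<pi> 0, \<pi> 1, \<pi> 2) = (1,0,2) \<or> (\<pi> 0, \<pi> 1, \<pi> 2) = (0,2,1)
      \<or> (\<pi> 0, \<pi> 1, \<pi> 2) = (2,1,0) \<or> (\<pi> 0, \<pi> 1, \<pi> 2) = (1,2,0) \<or> (\<pi> 0, \<pi> 1, \<pi> 2) = (2,0,1)"
      by blast
    thus ?thesis
    proof (elim disjE)
      assume h: "(\<pi> 0, \<pi> 1, \<pi> 2) = (0,1,2)"
      hence "\<pi> = id" using perm3_id[OF assms(2)] by simp
      with assms(3) show ?thesis by simp
    next
      assume h: "(\<pi> 0, \<pi> 1, \<pi> 2) = (1,0,2)"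
      show ?thesis
        by (rule cs[where P="\<lambda>x y z. x \<otimes> y \<otimes> z = y \<otimes> x \<otimes> z"]) (use h cc in simp_all)
    next
      assume h: "(\<pi> 0, \<pi> 1, \<pi> 2) = (0,2,1)"
      show ?thesis
        by (rule cs[where P="\<lambda>x y z. x \<otimes> y \<otimes> z = x \<otimes> z \<otimes> y"]) (use h cc in simp_all)
    next
      assume h: "(\<pi> 0, \<pi> 1, \<pi> 2) = (2,1,0)"
      show ?thesis
        by (rule cs[where P="\<lambda>x y z. x \<otimes> y \<otimes> z = z \<otimes> y \<otimes> x"]) (use h cc in simp_all)
    next
      assume h: "(\<pi> 0, \<pi> 1, \<pi> 2) = (1,2,0)"
      show ?thesis
        by (rule cs[where P="\<lambda>x y z. x \<otimes> y \<otimes> z = y \<otimes> z \<otimes> x"]) (use h cc in simp_all)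
    next
      assume h: "(\<pi> 0, \<pi> 1, \<pi> 2) = (2,0,1)"
      show ?thesis
        by (rule cs[where P="\<lambda>x y z. x \<otimes> y \<otimes> z = z \<otimes> x \<otimes> y"]) (use h cc in simp_all)
    qed
  qed
  finally show ?thesis .
qed

theorem mainTheorem5:
  fixes G :: "('a, 'b) monoid_scheme"
  assumes "group G" and "finite (carrier G)"
  shows "Spec G 3 = {real (num_conj_classes G) / real (card (carrier G)), 1}
    \<and> (\<forall>\<pi>. \<pi> permutes {..<3} \<and> \<pi> \<noteq> id \<longrightarrow>
          perm_prob G 3 \<pi> = real (num_conj_classes G) / real (card (carrier G)))"
proof -
  interpret group G by fact
  define n where "n = card (carrier G)"
  define c where "c = num_conj_classes G"
  have npos: "n > 0" unfolding n_def using assms(2) one_closed card_gt_0_iff by blast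
  have cK: "card (comm_pairs G) = c * n" unfolding c_def n_def by (rule comm_count[OF assms])
  have nonid: "perm_prob G 3 \<pi> = real c / real n" if "\<pi> permutes {..<3}" "\<pi> \<noteq> id" for \<pi>
  proof -
    have "perm_prob G 3 \<pi> = real (n * (c * n)) / real n ^ 3"
      unfolding perm_prob_def count_nonid[OF assms(1) that] card_cartesian_product cK n_def ..
    also have "\<dots> = real c / real n" using npos by (simp add: field_simps power3_eq_cube)
    finally show ?thesis .
  qed
  have idp: "perm_prob G 3 id = 1"
  proof -
    have "card ({..<3::nat} \<rightarrow>\<^sub>E carrier G) = n ^ 3" by (simp add: card_PiE n_def)
    thus ?thesis unfolding perm_prob_def using npos by (simp add: n_def)
  qed
  have tr: "Transposition.transpose 0 1 permutes {..<3::nat}" by (rule permutes_swap_id) auto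
  have trn: "Transposition.transpose (0::nat) 1 \<noteq> id"
    by (metis id_apply transpose_apply_first zero_neq_one)
  have "Spec G 3 = {real c / real n, 1}"
  proof
    show "Spec G 3 \<subseteq> {real c / real n, 1}"
      unfolding Spec_def using nonid idp by auto
    show "{real c / real n, 1} \<subseteq> Spec G 3"
      unfolding Spec_def
      using nonid[OF tr trn] idp permutes_id[of "{..<3::nat}"] tr
      by (auto intro!: image_eqI)
  qed
  thus ?thesis using nonid unfolding c_def n_def by blast
qed

end
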